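(* Let $0<e<\Lambda$, $\phi_h>0$, $f:[0,\phi_h]\to(0,1]$ strictly concave, strictly decreasing, differentiable with $f(0)=1$. Consider the two-player game with action sets $[0,\phi_h]$ and payoffs $\tilde{\mathcal M}_i(\phi_i,\phi_{-i})$ given by: - if $\phi_i=\phi_{-i}$: $e\phi_i$ if $\phi_i<\underline\phi$, and $\frac{\Lambda}{2}f(\phi_i)\phi_i$ if $\phi_i\ge\underline\phi$; - if $\phi_i<\phi_{-i}$: $e\phi_i$ if $\phi_{-i}<\bar\phi$, and $\min\{\Lambda f(\phi_i),e\}\phi_i$ if $\phi_{-i}\ge\bar\phi$; - if $\phi_i>\phi_{-i}$: $e\phi_i$ if $\phi_i<\underline\phi$, $m(\phi_i)$ if $\phi_i\in[\underline\phi,\bar\phi)$, and $0$ if $\phi_i\ge\bar\phi$. Let $\phi^*_m$ be the unique maximizer of $m(\phi)=(\Lambda f(\phi)-e)\phi$ over $[0,\phi_h]$, and set $\phi_U^*=\phi^*_m$, $\phi_L^*=m(\phi^*_m)/e=\bigl(\frac{\Lambda f(\phi^*_m)}{e}-1\bigr)\phi^*_m$. If $\underline\phi<\phi^*_m\le\min\{\phi_h,\bar\phi\}$, then $[\phi_L^*,\phi_U^*]$ is an equilibrium cycle.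
   Context: These payoffs are the limiting (driver abandonment rate $\beta\to0$) long-run revenue rates of two symmetric ride-hailing platforms using static prices, when passengers (total Poisson rate $\Lambda$) split across platforms by a Wardrop equilibrium equalizing the probability of not obtaining a ride; $e$ is the effective driver arrival rate per platform and $f(\phi)$ the probability a passenger accepts price $\phi$. Thresholds: $\underline{\phi}:=\inf\{\phi\in[0,\phi_h]: f(\phi)\le 2e/\Lambda\}$, $\bar\phi:=\inf\{\phi\in[0,\phi_h]: f(\phi)\le e/\Lambda\}$, $\inf\emptyset=+\infty$ (so they equal $f^{-1}(2e/\Lambda)$, $f^{-1}(e/\Lambda)$ when in range and $0$ when $2e/\Lambda>1$, resp. $e/\Lambda>1$). Equilibrium cycle: a closed interval $[a,b]\subseteq[0,\phi_h]$ such that (i) for every player $i$, every $\phi_{-i}\in[a,b]$ and every $\phi_i\in[0,\phi_h]\setminus[a,b]$ there is $\phi_i'\in[a,b]$ with $\tilde{\mathcal M}_i(\phi_i',\phi_{-i})>\tilde{\mathcal M}_i(\phi_i,\phi_{-i})$; and (ii) for every $(\phi_1,\phi_2)\in[a,b]^2$ there exist a player $i$ and $\phi_i'\in[a,b]$ with $\tilde{\mathcal M}_i(\phi_i',\phi_{-i})>\tilde{\mathcal M}_i(\phi_i,\phi_{-i})$. *)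

theory Defs
  imports "HOL-Analysis.Analysis" "HOL-Library.Extended_Real"
begin

definition strictly_concave_on :: "real set \<Rightarrow> (real \<Rightarrow> real) \<Rightarrow> bool" where
  "strictly_concave_on S f \<longleftrightarrow> convex S \<and>
     (\<forall>x\<in>S. \<forall>y\<in>S. x \<noteq> y \<longrightarrow> (\<forall>t. 0 < t \<and> t < 1 \<longrightarrow>
        f ((1 - t) * x + t * y) > (1 - t) * f x + t * f y))"

text \<open>Thresholds, with inf of the empty set equal to +infinity (hence extended reals).\<close>
definition phi_low :: "real \<Rightarrow> real \<Rightarrow> (real \<Rightarrow> real) \<Rightarrow> real \<Rightarrow> ereal" where
  "phi_low Lam e f phih = Inf (ereal ` {p \<in> {0..phih}. f p \<le> 2 * e / Lam})"

definition phi_bar :: "real \<Rightarrow> real \<Rightarrow> (real \<Rightarrow> real) \<Rightarrow> real \<Rightarrow> ereal" where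
  "phi_bar Lam e f phih = Inf (ereal ` {p \<in> {0..phih}. f p \<le> e / Lam})"

definition mfun :: "real \<Rightarrow> real \<Rightarrow> (real \<Rightarrow> real) \<Rightarrow> real \<Rightarrow> real" where
  "mfun Lam e f p = (Lam * f p - e) * p"

definition payoff :: "real \<Rightarrow> real \<Rightarrow> (real \<Rightarrow> real) \<Rightarrow> real \<Rightarrow> real \<Rightarrow> real \<Rightarrow> real" where
  "payoff Lam e f phih x y =
     (if x = y then
        (if ereal x < phi_low Lam e f phih then e * x else Lam / 2 * f x * x)
      else if x < y then
        (if ereal y < phi_bar Lam e f phih then e * x else min (Lam * f x) e * x)
      else
        (if ereal x < phi_low Lam e f phih then e * x
         else if ereal x < phi_bar Lam e f phih then mfun Lam e f x
         else 0))"

text \<open>Equilibrium cycle of a two-player game with action sets [0,phih];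
  U1 x y and U2 x y are the payoffs of players 1 and 2 at the profile (x,y)
  where player 1 plays x and player 2 plays y.\<close>
definition equilibrium_cycle ::
  "real \<Rightarrow> (real \<Rightarrow> real \<Rightarrow> real) \<Rightarrow> (real \<Rightarrow> real \<Rightarrow> real) \<Rightarrow> real \<Rightarrow> real \<Rightarrow> bool" where
  "equilibrium_cycle phih U1 U2 a b \<longleftrightarrow>
     0 \<le> a \<and> a \<le> b \<and> b \<le> phih \<and>
     (\<forall>y\<in>{a..b}. \<forall>x\<in>{0..phih} - {a..b}. \<exists>x'\<in>{a..b}. U1 x' y > U1 x y) \<and>
     (\<forall>x\<in>{a..b}. \<forall>y\<in>{0..phih} - {a..b}. \<exists>y'\<in>{a..b}. U2 x y' > U2 x y) \<and>
     (\<forall>x\<in>{a..b}. \<forall>y\<in>{a..b}.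
        (\<exists>x'\<in>{a..b}. U1 x' y > U1 x y) \<or> (\<exists>y'\<in>{a..b}. U2 x y' > U2 x y))"

end

theory Submission
  imports Defs
begin

lemma mid_in: "(u::real) \<in> {a..b} \<Longrightarrow> v \<in> {a..b} \<Longrightarrow> (u+v)/2 \<in> {a..b}"
  by auto

lemma max_in: "(a::real) \<le> b \<Longrightarrow> c \<le> b \<Longrightarrow> max a c \<in> {a..b}"
  by auto

lemma inf_below:
  fixes f :: "real \<Rightarrow> real" and c :: real
  assumes "ereal x < Inf (ereal ` {p\<in>{0..h}. f p \<le> c})" "x \<in> {0..h}"
  shows "f x > c"
proof (rule ccontr)
  assume "\<not> f x > c"
  then have "x \<in> {p\<in>{0..h}. f p \<le> c}" using assms(2) by auto
  then have "Inf (ereal ` {p\<in>{0..h}. f p \<le> c}) \<le> ereal x" by (rule INF_lower)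
  then show False using assms(1) by simp
qed

lemma inf_above:
  fixes f :: "real \<Rightarrow> real" and c :: real
  assumes "Inf (ereal ` {p\<in>{0..h}. f p \<le> c}) < ereal x" "x \<in> {0..h}"
    "strict_antimono_on {0..h} f"
  shows "f x < c" "\<exists>p\<in>{0..h}. p < x"
proof -
  obtain p where p: "p \<in> {p\<in>{0..h}. f p \<le> c}" "ereal p < ereal x"
    using assms(1) by (auto simp: INF_less_iff)
  then have "f x < f p" using assms(2,3) by (auto simp: monotone_on_def)
  then show "f x < c" using p by auto
  show "\<exists>p\<in>{0..h}. p < x" using p by auto
qed

lemma inf_closed:
  fixes f :: "real \<Rightarrow> real" and c :: real
  assumes "Inf (ereal ` {p\<in>{0..h}. f p \<le> c}) = ereal p0"
    "continuous_on {0..h} f"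
  shows "f p0 \<le> c" "p0 \<in> {0..h}"
proof -
  let ?S = "{p\<in>{0..h}. f p \<le> c}"
  have ne: "?S \<noteq> {}"
  proof
    assume "?S = {}"
    then have "Inf (ereal ` ?S) = (top::ereal)" by (simp only: image_empty Inf_empty)
    then show False using assms(1) by (simp add: top_ereal_def)
  qed
  have lb: "p0 \<le> p" if "p \<in> ?S" for p
  proof -
    have "Inf (ereal ` ?S) \<le> ereal p" using that by (rule INF_lower)
    then show ?thesis using assms(1) by simp
  qed
  have "ereal 0 \<le> Inf (ereal ` ?S)" by (rule INF_greatest) auto
  then have p00: "0 \<le> p0" using assms(1) by simp
  obtain q where "q \<in> ?S" using ne by auto
  then show p0in: "p0 \<in> {0..h}" using lb[of q] p00 by auto
  show "f p0 \<le> c"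
  proof (rule ccontr)
    assume "\<not> f p0 \<le> c"
    then have gt: "f p0 - c > 0" by simp
    obtain d where d: "d > 0" "\<forall>x'\<in>{0..h}. dist x' p0 < d \<longrightarrow> dist (f x') (f p0) < f p0 - c"
      using assms(2) p0in gt unfolding continuous_on_iff by blast
    have "Inf (ereal ` ?S) < ereal (p0 + d)" using assms(1) d(1) by simp
    then obtain p where p: "p \<in> ?S" "ereal p < ereal (p0 + d)"
      by (auto simp: INF_less_iff)
    have "p0 \<le> p" using lb p(1) by blast
    then have "dist p p0 < d" using p(2) by (simp add: dist_real_def)
    then have "dist (f p) (f p0) < f p0 - c" using d(2) p(1) by blast
    then show False using p(1) by (simp add: dist_real_def abs_if split: if_splits)
  qed
qed

lemma m_unique:
  fixes Lam e h phim x :: real and f :: "real \<Rightarrow> real"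
  assumes Lam: "Lam > 0" and sa: "strict_antimono_on {0..h} f"
    and sc: "strictly_concave_on {0..h} f"
    and pm: "phim \<in> {0..h}" "phim > 0"
    and mx: "\<forall>p\<in>{0..h}. mfun Lam e f p \<le> mfun Lam e f phim"
    and x: "x \<in> {0..h}" "x \<noteq> phim"
  shows "mfun Lam e f x < mfun Lam e f phim"
proof (rule ccontr)
  assume "\<not> ?thesis"
  then have ge: "mfun Lam e f x \<ge> mfun Lam e f phim" by simp
  define z where "z = (1 - 1/2) * x + (1/2) * phim"
  have zin: "z \<in> {0..h}" using x pm by (auto simp: z_def)
  have zpos: "z > 0" using x pm by (auto simp: z_def)
  have fz: "f z > (1 - 1/2) * f x + (1/2) * f phim"
  proof -
    have "\<forall>t. 0 < t \<and> t < 1 \<longrightarrow> f ((1 - t) * x + t * phim) > (1 - t) * f x + t * f phim"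
      using sc x pm unfolding strictly_concave_on_def by auto
    then show ?thesis unfolding z_def by (metis field_sum_of_halves half_gt_zero_iff less_add_same_cancel1 zero_less_one)
  qed
  have anti: "(x - phim) * (f x - f phim) \<le> 0"
  proof (cases "x < phim")
    case True
    then have "f phim < f x" using sa x pm by (auto simp: monotone_on_def)
    then show ?thesis using True by (simp add: mult_nonpos_nonneg)
  next
    case False
    then have "phim < x" using x by simp
    then have "f x < f phim" using sa x pm by (auto simp: monotone_on_def)
    then show ?thesis using \<open>phim < x\<close> by (simp add: mult_nonneg_nonpos)
  qed
  have "z * f z > z * ((f x + f phim)/2)" using fz zpos by simp
  moreover have "z * ((f x + f phim)/2) \<ge> (x * f x + phim * f phim)/2"
  proof -
    have "z * ((f x + f phim)/2) - (x * f x + phim * f phim)/2 = - (x - phim) * (f x - f phim) / 4"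
      unfolding z_def by (simp add: field_simps)
    then show ?thesis using anti by linarith
  qed
  ultimately have zz: "z * f z > (x * f x + phim * f phim)/2" by linarith
  have "mfun Lam e f z = Lam * (z * f z) - e * z" unfolding mfun_def by (simp add: algebra_simps)
  also have "\<dots> > Lam * ((x * f x + phim * f phim)/2) - e * z"
    using zz Lam by simp
  also have "Lam * ((x * f x + phim * f phim)/2) - e * z = (mfun Lam e f x + mfun Lam e f phim)/2"
    unfolding mfun_def z_def by (simp add: field_simps)
  finally have zz2: "mfun Lam e f z > (mfun Lam e f x + mfun Lam e f phim)/2" .
  have "mfun Lam e f z > mfun Lam e f phim" using zz2 ge by (simp add: field_simps)
  then show False using mx zin by force
qed


theorem theorem5:
  fixes Lam e phih :: real and f :: "real \<Rightarrow> real" and phim :: real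
  assumes "0 < e" and "e < Lam" and "0 < phih"
    and "f ` {0..phih} \<subseteq> {0<..1}"
    and "strictly_concave_on {0..phih} f"
    and "strict_antimono_on {0..phih} f"
    and "\<forall>x\<in>{0..phih}. f differentiable (at x within {0..phih})"
    and "f 0 = 1"
    and "phim \<in> {0..phih}"
    and "\<forall>p\<in>{0..phih}. mfun Lam e f p \<le> mfun Lam e f phim"
    and "phi_low Lam e f phih < ereal phim"
    and "ereal phim \<le> min (ereal phih) (phi_bar Lam e f phih)"
  shows "equilibrium_cycle phih
           (\<lambda>x y. payoff Lam e f phih x y) (\<lambda>x y. payoff Lam e f phih y x)
           (mfun Lam e f phim / e) phim"
proof -
  note e0 = assms(1) and eL = assms(2) and sa = assms(6) and sc = assms(5)
  note pm = assms(9) and mx = assms(10)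
  have Lam0: "Lam > 0" using e0 eL by simp
  let ?pl = "phi_low Lam e f phih" and ?pb = "phi_bar Lam e f phih"
  let ?L = "mfun Lam e f phim / e" and ?m = "mfun Lam e f"
  have pl_def': "?pl = Inf (ereal ` {p\<in>{0..phih}. f p \<le> 2 * e / Lam})" by (simp add: phi_low_def)
  have pb_def': "?pb = Inf (ereal ` {p\<in>{0..phih}. f p \<le> e / Lam})" by (simp add: phi_bar_def)
  have cont: "continuous_on {0..phih} f"
    using assms(7) by (simp add: continuous_on_eq_continuous_within differentiable_imp_continuous_within)
  have pmpb: "ereal phim \<le> ?pb" using assms(12) by simp
  have fm2: "f phim < 2 * e / Lam" and "\<exists>p\<in>{0..phih}. p < phim"
    using inf_above[OF assms(11)[unfolded pl_def'] pm sa] by auto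
  then have phim0: "phim > 0" by auto
  have "f (phim/2) > e / Lam"
  proof (rule inf_below[where x="phim/2" and h=phih and f=f and c="e/Lam"])
    have "ereal (phim/2) < ereal phim" using phim0 by simp
    then show "ereal (phim/2) < Inf (ereal ` {p\<in>{0..phih}. f p \<le> e / Lam})"
      using order_less_le_trans[OF _ pmpb[unfolded pb_def']] by blast
    show "phim/2 \<in> {0..phih}" using phim0 pm by auto
  qed
  then have "Lam * f (phim/2) - e > 0" using Lam0 by (simp add: field_simps)
  then have "?m (phim/2) > 0" using phim0 unfolding mfun_def by simp
  moreover have "?m (phim/2) \<le> ?m phim" using mx pm phim0 by auto
  ultimately have mpos: "?m phim > 0" by linarith
  then have "Lam * f phim - e > 0" using phim0 unfolding mfun_def by (simp add: zero_less_mult_iff)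
  then have fme: "f phim > e / Lam" using Lam0 by (simp add: field_simps)
  have Upb: "ereal phim < ?pb"
  proof (rule ccontr)
    assume "\<not> ?thesis"
    then have "?pb = ereal phim" using pmpb by simp
    then have "Inf (ereal ` {p\<in>{0..phih}. f p \<le> e / Lam}) = ereal phim" by (simp only: pb_def')
    then have "f phim \<le> e / Lam" by (rule inf_closed(1)[OF _ cont])
    then show False using fme by simp
  qed
  have mU: "?m phim = e * ?L" using e0 by simp
  have L0: "?L > 0" using mpos e0 by simp
  have LU: "?L < phim"
  proof -
    have "Lam * f phim - e < e" using fm2 Lam0 by (simp add: field_simps)
    then have "?m phim < e * phim" using phim0 unfolding mfun_def by simp
    then show ?thesis using e0 by (simp add: field_simps)
  qed
  have uniq: "\<And>x. x \<in> {0..phih} \<Longrightarrow> x \<noteq> phim \<Longrightarrow> ?m x < ?m phim"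
    using m_unique[OF Lam0 sa sc pm phim0 mx] by blast
  have ybar: "\<And>y. y \<le> phim \<Longrightarrow> ereal y < ?pb" using Upb
    by (meson ereal_less_eq(3) order_le_less_trans)
  have not_pl: "\<And>x. x \<ge> phim \<Longrightarrow> \<not> ereal x < ?pl" using assms(11)
    by (meson ereal_less_eq(3) order.strict_trans1 order_less_asym)
  have Up: "\<And>y. y < phim \<Longrightarrow> payoff Lam e f phih phim y = e * ?L"
    using not_pl[of phim] Upb mU unfolding payoff_def by auto
  have Lp: "payoff Lam e f phih ?L phim = e * ?L"
    using LU Upb unfolding payoff_def by auto
  have A: "\<And>y. y \<in> {?L..phim} \<Longrightarrow> \<exists>x'\<in>{?L..phim}. payoff Lam e f phih x' y = e * ?L"
  proof -
    fix y assume y: "y \<in> {?L..phim}"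
    show "\<exists>x'\<in>{?L..phim}. payoff Lam e f phih x' y = e * ?L"
    proof (cases "y < phim")
      case True then show ?thesis using Up[OF True] LU by auto
    next
      case False then have "y = phim" using y by auto
      then show ?thesis using Lp LU by auto
    qed
  qed
  have B: "\<And>x y. y \<in> {?L..phim} \<Longrightarrow> x \<in> {0..phih} - {?L..phim} \<Longrightarrow> payoff Lam e f phih x y < e * ?L"
  proof -
    fix x y assume y: "y \<in> {?L..phim}" and x: "x \<in> {0..phih} - {?L..phim}"
    show "payoff Lam e f phih x y < e * ?L"
    proof (cases "x < ?L")
      case True
      then have "x < y" using y by auto
      then have "payoff Lam e f phih x y = e * x" using ybar[of y] y unfolding payoff_def by auto
      moreover have "e * x < e * ?L" using True e0 by (simp add: field_simps)
      ultimately show ?thesis by simp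
    next
      case False
      then have xg: "x > phim" using x by auto
      then have xy: "\<not> x < y" "x \<noteq> y" using y by auto
      have npl: "\<not> ereal x < ?pl" using not_pl xg by simp
      show ?thesis
      proof (cases "ereal x < ?pb")
        case True
        then have "payoff Lam e f phih x y = ?m x" using xy npl unfolding payoff_def by auto
        moreover have "?m x < ?m phim" using uniq x xg by auto
        ultimately show ?thesis using mU by simp
      next
        case False
        then have "payoff Lam e f phih x y = 0" using xy npl unfolding payoff_def by auto
        then show ?thesis using mpos e0 by simp
      qed
    qed
  qed
  have I: "\<forall>y\<in>{?L..phim}. \<forall>x\<in>{0..phih} - {?L..phim}. \<exists>x'\<in>{?L..phim}.
            payoff Lam e f phih x' y > payoff Lam e f phih x y"
  proof (intro ballI)
    fix y x assume y: "y \<in> {?L..phim}" and x: "x \<in> {0..phih} - {?L..phim}"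
    obtain x' where x': "x' \<in> {?L..phim}" "payoff Lam e f phih x' y = e * ?L" using A[OF y] by blast
    show "\<exists>x'\<in>{?L..phim}. payoff Lam e f phih x' y > payoff Lam e f phih x y"
      using x'(1) x'(2) B[OF y x] by metis
  qed
  have C: "\<And>x y. x \<in> {?L..phim} \<Longrightarrow> y \<in> {?L..phim} \<Longrightarrow> x < y \<Longrightarrow>
            \<exists>x'\<in>{?L..phim}. payoff Lam e f phih x' y > payoff Lam e f phih x y"
  proof -
    fix x y assume x: "x \<in> {?L..phim}" and y: "y \<in> {?L..phim}" and xy: "x < y"
    have "payoff Lam e f phih x y = e * x" using xy ybar[of y] y unfolding payoff_def by auto
    moreover have "payoff Lam e f phih ((x+y)/2) y = e * ((x+y)/2)"
      using xy ybar[of y] y unfolding payoff_def by auto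
    moreover have "(x+y)/2 \<in> {?L..phim}" using mid_in[OF x y] .
    moreover have "e * x < e * ((x+y)/2)" using e0 xy by simp
    ultimately show "\<exists>x'\<in>{?L..phim}. payoff Lam e f phih x' y > payoff Lam e f phih x y" by metis
  qed
  obtain p0 where p0: "?pl = ereal p0"
  proof -
    have "ereal 0 \<le> ?pl" unfolding pl_def' by (rule INF_greatest) auto
    show ?thesis
    proof (cases ?pl)
      case (real r) then show ?thesis by (rule that)
    next
      case PInf then show ?thesis using assms(11) by simp
    next
      case MInf then show ?thesis using \<open>ereal 0 \<le> ?pl\<close> by simp
    qed
  qed
  have p0U: "p0 < phim" using p0 assms(11) by simp
  have D: "\<And>x. x \<in> {?L..phim} \<Longrightarrow>
            \<exists>x'\<in>{?L..phim}. payoff Lam e f phih x' x > payoff Lam e f phih x x"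
  proof -
    fix x assume x: "x \<in> {?L..phim}"
    show "\<exists>x'\<in>{?L..phim}. payoff Lam e f phih x' x > payoff Lam e f phih x x"
    proof (cases "x < p0")
      case True
      define x' where "x' = (x + p0)/2"
      have x'in: "x' \<in> {?L..phim}" unfolding x'_def
        by (rule mid_in[OF x]) (use x True p0U in auto)
      have "payoff Lam e f phih x x = e * x" using True p0 unfolding payoff_def by auto
      moreover have "payoff Lam e f phih x' x = e * x'" using True p0 unfolding payoff_def x'_def by auto
      moreover have "e * x < e * x'" using e0 True by (simp add: x'_def)
      ultimately show ?thesis using x'in by metis
    next
      case False
      then have P: "payoff Lam e f phih x x = Lam / 2 * f x * x" using p0 unfolding payoff_def by auto
      have xin: "x \<in> {0..phih}" using x L0 pm by auto
      show ?thesis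
      proof (cases "f x < 2 * e / Lam")
        case fl: True
        then have lt: "Lam / 2 * f x * x < e * x" using Lam0 L0 x by (simp add: field_simps)
        show ?thesis
        proof (cases "x = ?L")
          case True
          then have "payoff Lam e f phih phim x = e * ?L" using Up LU by simp
          moreover have "phim \<in> {?L..phim}" unfolding atLeastAtMost_iff using LU by (intro conjI; linarith)
          moreover have "payoff Lam e f phih x x < e * ?L" using P lt True by simp
          ultimately show ?thesis by metis
        next
          case False
          then have xL: "x > ?L" using x by auto
          define c where "c = Lam * f x * x / (2 * e)"
          have cx: "c < x" using lt e0 by (simp add: c_def field_simps)
          define x' where "x' = (max ?L c + x) / 2"
          have x'in: "x' \<in> {?L..phim}" unfolding x'_def
            by (rule mid_in[OF max_in x]) (use x cx in auto)
          have x'x: "x' < x" using xL cx by (auto simp: x'_def)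
          have "payoff Lam e f phih x' x = e * x'" using x'x ybar[of x] x unfolding payoff_def by auto
          moreover have "e * x' > Lam / 2 * f x * x"
          proof -
            have "x' > c" using xL cx by (auto simp: x'_def)
            then have "e * x' > e * c" using e0 by simp
            moreover have "e * c = Lam / 2 * f x * x" using e0 by (simp add: c_def field_simps)
            ultimately show ?thesis by simp
          qed
          ultimately show ?thesis using P x'in by metis
        qed
      next
        case fg: False
        have "x = p0"
        proof (rule ccontr)
          assume "x \<noteq> p0"
          then have "?pl < ereal x" using p0 False by simp
          then have "Inf (ereal ` {p\<in>{0..phih}. f p \<le> 2 * e / Lam}) < ereal x" by (simp only: pl_def')
          then have "f x < 2 * e / Lam" by (rule inf_above(1)[OF _ xin sa])
          then show False using fg by simp
        qed
        moreover have "f p0 \<le> 2 * e / Lam"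
        proof -
          have "Inf (ereal ` {p\<in>{0..phih}. f p \<le> 2 * e / Lam}) = ereal p0" using p0 by (simp only: pl_def')
          then show ?thesis by (rule inf_closed(1)[OF _ cont])
        qed
        ultimately have fx: "f x = 2 * e / Lam" using fg by simp
        then have "payoff Lam e f phih x x = e * x" using P Lam0 by simp
        also have "e * x = ?m x" using fx Lam0 unfolding mfun_def by simp
        also have "\<dots> < ?m phim" using uniq xin \<open>x = p0\<close> p0U by auto
        also have "?m phim = payoff Lam e f phih phim x" using Up[of x] mU \<open>x = p0\<close> p0U by simp
        finally show ?thesis using LU by auto
      qed
    qed
  qed
  show ?thesis
    unfolding equilibrium_cycle_def
  proof (intro conjI)
    show "0 \<le> ?L" using L0 by simp
    show "?L \<le> phim" using LU by simp
    show "phim \<le> phih" using pm by simp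
    show "\<forall>y\<in>{?L..phim}. \<forall>x\<in>{0..phih} - {?L..phim}. \<exists>x'\<in>{?L..phim}.
            payoff Lam e f phih x' y > payoff Lam e f phih x y" by (rule I)
    show "\<forall>x\<in>{?L..phim}. \<forall>y\<in>{0..phih} - {?L..phim}. \<exists>y'\<in>{?L..phim}.
            payoff Lam e f phih y' x > payoff Lam e f phih y x" using I by blast
    show "\<forall>x\<in>{?L..phim}. \<forall>y\<in>{?L..phim}.
        (\<exists>x'\<in>{?L..phim}. payoff Lam e f phih x' y > payoff Lam e f phih x y) \<or>
        (\<exists>y'\<in>{?L..phim}. payoff Lam e f phih y' x > payoff Lam e f phih y x)"
    proof (intro ballI)
      fix x y assume x: "x \<in> {?L..phim}" and y: "y \<in> {?L..phim}"
      consider "x < y" | "y < x" | "x = y" by linarith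
      then show "(\<exists>x'\<in>{?L..phim}. payoff Lam e f phih x' y > payoff Lam e f phih x y) \<or>
        (\<exists>y'\<in>{?L..phim}. payoff Lam e f phih y' x > payoff Lam e f phih y x)"
      proof cases
        case 1 then show ?thesis using C x y by blast
      next
        case 2 then show ?thesis using C x y by blast
      next
        case 3 then show ?thesis using D x by blast
      qed
    qed
  qed
qed

end
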